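(* Let $L\ge 1$ and $n\ge0$ be integers. Let $\tilde A_{L,0}(n)$ be the number of partitions $\pi$ of $n$ into parts congruent to $\pm1\pmod 8$ with largest part at most $8L-1$, such that $\nu(\pi,1)\ge\nu(\pi,7)$ and, writing $D=\nu(\pi,1)-\nu(\pi,7)$, at least one of the following holds: (i) $3\mid D$ and $\mu(\pi,1)\ge \tfrac23 D$; (ii) $5\mid D$, $3\nmid D$, and $\mu(\pi,1)\ge\tfrac45 D$; (iii) $D\equiv -8\pmod{15}$, $\mu(\pi,7)>0$, and $\mu(\pi,1)\ge\tfrac15(4D-3)$. Then $\tilde A_{L,0}(n)=A_{L,1}(n)$, where $A_{L,1}(n)$ is the number of partitions of $n$ into parts congruent to $\pm3\pmod 8$ with largest part at most $8L-3$.
   Context: For a partition $\pi$, $\nu(\pi,i)$ denotes the number of parts of $\pi$ congruent to $i\pmod 8$, and $\mu(\pi,i)$ denotes the number of parts of $\pi$ equal to $i$. *)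

theory Defs
  imports Main "HOL-Library.Multiset"
begin

definition partitions :: "nat \<Rightarrow> nat multiset set" where
  "partitions n = {p. (\<forall>x\<in>#p. 0 < x) \<and> sum_mset p = n}"

definition nu :: "nat multiset \<Rightarrow> nat \<Rightarrow> nat" where
  "nu p i = size (filter_mset (\<lambda>x. x mod 8 = i mod 8) p)"

definition mu :: "nat multiset \<Rightarrow> nat \<Rightarrow> nat" where
  "mu p i = count p i"

definition A_tilde_L0 :: "nat \<Rightarrow> nat \<Rightarrow> nat" where
  "A_tilde_L0 L n = card {p \<in> partitions n.
      (\<forall>x\<in>#p. (x mod 8 = 1 \<or> x mod 8 = 7) \<and> x \<le> 8 * L - 1) \<and>
      nu p 1 \<ge> nu p 7 \<and>
      (let D = int (nu p 1) - int (nu p 7) in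
         (3 dvd D \<and> 3 * int (mu p 1) \<ge> 2 * D) \<or>
         (5 dvd D \<and> \<not> 3 dvd D \<and> 5 * int (mu p 1) \<ge> 4 * D) \<or>
         (D mod 15 = (-8) mod 15 \<and> mu p 7 > 0 \<and> 5 * int (mu p 1) \<ge> 4 * D - 3))}"

definition A_L1 :: "nat \<Rightarrow> nat \<Rightarrow> nat" where
  "A_L1 L n = card {p \<in> partitions n.
      \<forall>x\<in>#p. (x mod 8 = 3 \<or> x mod 8 = 5) \<and> x \<le> 8 * L - 3}"

end

theory Submission
  imports Defs
begin

lemma sfi: "(\<forall>z\<in>#p. Q (f z) = R z) \<Longrightarrow> size (filter_mset Q (image_mset f p)) = size (filter_mset R p)"
  by (induction p) auto

lemma cim: "(\<forall>z\<in>#p. (f z = c) = (z = d)) \<Longrightarrow> count (image_mset f p) c = count p d"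
  by (induction p) auto

lemma img_id: "(\<forall>z\<in>#p. g (f z) = z) \<Longrightarrow> image_mset g (image_mset f p) = p"
  by (induction p) auto

lemma sum_shift:
  "(\<forall>z\<in>#p. int (f z) = int z + (if z mod 8 = r then a else b)) \<Longrightarrow>
   int (sum_mset (image_mset f p)) = int (sum_mset p) + a * int (size (filter_mset (\<lambda>z. z mod 8 = r) p))
     + b * int (size (filter_mset (\<lambda>z. z mod 8 \<noteq> r) p))"
  by (induction p) (auto simp: algebra_simps)

lemma filt_rep: "filter_mset P (replicate_mset k x) = (if P x then replicate_mset k x else {#})"
  by (induction k) auto

lemma nu_plus: "nu (A + B) i = nu A i + nu B i"
  by (simp add: nu_def)

lemma nu_rep1: "nu (replicate_mset k 1) 1 = k" "nu (replicate_mset k 1) 7 = 0"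
  "nu (replicate_mset k 1) 3 = 0" "nu (replicate_mset k 1) 5 = 0"
  by (simp_all add: nu_def filt_rep)

lemma nu_rep1s[simp]: "nu (replicate_mset k (Suc 0)) (Suc 0) = k" "nu (replicate_mset k (Suc 0)) 7 = 0"
  "nu (replicate_mset k (Suc 0)) 3 = 0" "nu (replicate_mset k (Suc 0)) 5 = 0"
  by (simp_all add: nu_def filt_rep)

lemma nu_add_mset[simp]: "nu (add_mset x A) i = (if x mod 8 = i mod 8 then Suc (nu A i) else nu A i)"
  by (simp add: nu_def)

lemma nu_7: "nu {#7#} 1 = 0" "nu {#7#} 7 = 1"
  by (simp_all add: nu_def)

lemma sub_add: "k \<le> count q x \<Longrightarrow> q - replicate_mset k x + replicate_mset k x = q"
  by (simp add: multiset_eq_iff)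

definition h1 :: "nat \<Rightarrow> nat" where "h1 z = (if z mod 8 = 3 then z - 2 else z + 2)"
definition g1 :: "nat \<Rightarrow> nat" where "g1 z = (if z mod 8 = 1 then z + 2 else z - 2)"
definition h2 :: "nat \<Rightarrow> nat" where "h2 z = (if z mod 8 = 3 then z + 4 else z - 4)"
definition g2 :: "nat \<Rightarrow> nat" where "g2 z = (if z mod 8 = 1 then z + 4 else z - 4)"

definition okA :: "nat \<Rightarrow> nat \<Rightarrow> bool" where
  "okA L z = ((z mod 8 = 3 \<or> z mod 8 = 5) \<and> z \<le> 8 * L - 3)"
definition okT :: "nat \<Rightarrow> nat \<Rightarrow> bool" where
  "okT L z = ((z mod 8 = 1 \<or> z mod 8 = 7) \<and> z \<le> 8 * L - 1)"

lemma okA_cases: "okA L z \<Longrightarrow> \<exists>k. (z = 8*k+3 \<or> z = 8*k+5) \<and> z \<le> 8*L-3"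
  unfolding okA_def by presburger

lemma okT_cases: "okT L z \<Longrightarrow> \<exists>k. (z = 8*k+1 \<or> z = 8*k+7) \<and> z \<le> 8*L-1"
  unfolding okT_def by presburger

lemma h1_pt: assumes "okA L z"
  shows "okT L (h1 z)" "(h1 z mod 8 = 1) = (z mod 8 = 3)" "(h1 z mod 8 = 7) = (z mod 8 = 5)"
   "(h1 z = 1) = (z = 3)" "(h1 z = 7) = (z = 5)" "g1 (h1 z) = z"
   "int (h1 z) = int z + (if z mod 8 = 3 then -2 else 2)"
  using okA_cases[OF assms] apply (auto simp: okT_def h1_def g1_def) apply presburger+ done

lemma h2_pt: assumes "okA L z"
  shows "okT L (h2 z)" "(h2 z mod 8 = 1) = (z mod 8 = 5)" "(h2 z mod 8 = 7) = (z mod 8 = 3)"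
   "(h2 z = 1) = (z = 5)" "(h2 z = 7) = (z = 3)" "g2 (h2 z) = z"
   "int (h2 z) = int z + (if z mod 8 = 3 then 4 else -4)"
  using okA_cases[OF assms] apply (auto simp: okT_def h2_def g2_def) apply presburger+ done

lemma g1_pt: assumes "okT L z" "L \<ge> 1"
  shows "okA L (g1 z)" "(g1 z mod 8 = 3) = (z mod 8 = 1)" "(g1 z mod 8 = 5) = (z mod 8 = 7)"
   "(g1 z = 3) = (z = 1)" "(g1 z = 5) = (z = 7)" "h1 (g1 z) = z"
   "int (g1 z) = int z + (if z mod 8 = 1 then 2 else -2)"
  using okT_cases[OF assms(1)] assms(2) apply (auto simp: okA_def h1_def g1_def) apply presburger+ done

lemma g2_pt: assumes "okT L z" "L \<ge> 1"
  shows "okA L (g2 z)" "(g2 z mod 8 = 5) = (z mod 8 = 1)" "(g2 z mod 8 = 3) = (z mod 8 = 7)"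
   "(g2 z = 5) = (z = 1)" "(g2 z = 3) = (z = 7)" "h2 (g2 z) = z"
   "int (g2 z) = int z + (if z mod 8 = 1 then 4 else -4)"
  using okT_cases[OF assms(1)] assms(2) apply (auto simp: okA_def h2_def g2_def) apply presburger+ done

lemma nu_img: "(\<forall>z\<in>#p. (f z mod 8 = i) = (z mod 8 = j)) \<Longrightarrow> i < 8 \<Longrightarrow> j < 8 \<Longrightarrow>
   nu (image_mset f p) i = nu p j"
  unfolding nu_def using sfi[of p "\<lambda>x. x mod 8 = i" f "\<lambda>x. x mod 8 = j"] by simp

lemma nuA5: "\<forall>z\<in>#p. okA L z \<Longrightarrow> size (filter_mset (\<lambda>z. z mod 8 \<noteq> 3) p) = nu p 5"
  unfolding nu_def by (rule arg_cong[where f=size], rule filter_mset_cong) (auto simp: okA_def)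

lemma nuT7: "\<forall>z\<in>#p. okT L z \<Longrightarrow> size (filter_mset (\<lambda>z. z mod 8 \<noteq> 1) p) = nu p 7"
  unfolding nu_def by (rule arg_cong[where f=size], rule filter_mset_cong) (auto simp: okT_def)

lemma br1:
  assumes A: "\<forall>z\<in>#p. okA L z" and xy: "nu p 5 \<le> nu p 3" and L: "L \<ge> 1"
  defines "q \<equiv> image_mset h1 p + replicate_mset (2*(nu p 3 - nu p 5)) 1"
  shows "\<forall>z\<in>#q. okT L z" "sum_mset q = sum_mset p"
    "nu q 1 = nu q 7 + 3*(nu p 3 - nu p 5)" "2*(nu p 3 - nu p 5) \<le> count q 1"
    "q - replicate_mset (2*(nu p 3 - nu p 5)) 1 = image_mset h1 p"
    "image_mset g1 (image_mset h1 p) = p"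
proof -
  have n1: "nu (image_mset h1 p) 1 = nu p 3" by (rule nu_img) (use A h1_pt in auto)
  have n7: "nu (image_mset h1 p) 7 = nu p 5" by (rule nu_img) (use A h1_pt in auto)
  have s: "int (sum_mset (image_mset h1 p)) = int (sum_mset p) + (-2) * int (nu p 3) + 2 * int (nu p 5)"
    using sum_shift[of p h1 3 "-2" 2] A h1_pt(7) nuA5[OF A] by (auto simp: nu_def)
  show "\<forall>z\<in>#q. okT L z" using A h1_pt(1) L unfolding q_def okT_def by auto
  show "sum_mset q = sum_mset p" using s xy unfolding q_def by (simp del: of_nat_sum_mset)
  show "nu q 1 = nu q 7 + 3*(nu p 3 - nu p 5)" unfolding q_def using n1 n7 xy
    by (simp add: nu_plus nu_rep1)
  show "2*(nu p 3 - nu p 5) \<le> count q 1" unfolding q_def by simp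
  show "q - replicate_mset (2*(nu p 3 - nu p 5)) 1 = image_mset h1 p" unfolding q_def by simp
  show "image_mset g1 (image_mset h1 p) = p"
    by (rule img_id) (use A h1_pt in auto)
qed

lemma br1i:
  assumes T: "\<forall>z\<in>#q. okT L z" and L: "L \<ge> 1" and D: "nu q 1 = nu q 7 + 3*m"
    and c: "2*m \<le> count q 1"
  defines "r \<equiv> q - replicate_mset (2*m) 1"
  shows "\<forall>z\<in>#image_mset g1 r. okA L z" "sum_mset (image_mset g1 r) = sum_mset q"
    "nu (image_mset g1 r) 3 = nu (image_mset g1 r) 5 + m"
    "image_mset h1 (image_mset g1 r) = r" "r + replicate_mset (2*m) 1 = q"
proof -
  show qr: "r + replicate_mset (2*m) 1 = q" unfolding r_def using c by (rule sub_add)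
  have Tr: "\<forall>z\<in>#r. okT L z" using T unfolding r_def by (auto dest: in_diffD)
  have a1: "nu r 1 + 2*m = nu q 1" using arg_cong[OF qr, of "\<lambda>x. nu x 1"] by (simp add: nu_plus nu_rep1)
  have a7: "nu r 7 = nu q 7" using arg_cong[OF qr, of "\<lambda>x. nu x 7"] by (simp add: nu_plus nu_rep1)
  have as: "sum_mset r + 2*m = sum_mset q" using arg_cong[OF qr, of sum_mset] by simp
  have n3: "nu (image_mset g1 r) 3 = nu r 1" by (rule nu_img) (use Tr g1_pt L in auto)
  have n5: "nu (image_mset g1 r) 5 = nu r 7" by (rule nu_img) (use Tr g1_pt L in auto)
  have s: "int (sum_mset (image_mset g1 r)) = int (sum_mset r) + 2 * int (nu r 1) + (-2) * int (nu r 7)"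
    using sum_shift[of r g1 1 2 "-2"] Tr g1_pt(7) L nuT7[OF Tr] by (auto simp: nu_def)
  show "\<forall>z\<in>#image_mset g1 r. okA L z" using Tr g1_pt(1) L by auto
  show "sum_mset (image_mset g1 r) = sum_mset q" using s a1 a7 as D by (simp del: of_nat_sum_mset)
  show "nu (image_mset g1 r) 3 = nu (image_mset g1 r) 5 + m" using n3 n5 a1 a7 D by simp
  show "image_mset h1 (image_mset g1 r) = r"
    by (rule img_id) (use Tr g1_pt L in auto)
qed

lemma br2:
  assumes A: "\<forall>z\<in>#p. okA L z" and xy: "nu p 3 \<le> nu p 5" and L: "L \<ge> 1"
  defines "q \<equiv> image_mset h2 p + replicate_mset (4*(nu p 5 - nu p 3)) 1"
  shows "\<forall>z\<in>#q. okT L z" "sum_mset q = sum_mset p"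
    "nu q 1 = nu q 7 + 5*(nu p 5 - nu p 3)" "4*(nu p 5 - nu p 3) \<le> count q 1"
    "q - replicate_mset (4*(nu p 5 - nu p 3)) 1 = image_mset h2 p"
    "image_mset g2 (image_mset h2 p) = p"
proof -
  have n1: "nu (image_mset h2 p) 1 = nu p 5" by (rule nu_img) (use A h2_pt in auto)
  have n7: "nu (image_mset h2 p) 7 = nu p 3" by (rule nu_img) (use A h2_pt in auto)
  have s: "int (sum_mset (image_mset h2 p)) = int (sum_mset p) + 4 * int (nu p 3) + (-4) * int (nu p 5)"
    using sum_shift[of p h2 3 4 "-4"] A h2_pt(7) nuA5[OF A] by (auto simp: nu_def)
  show "\<forall>z\<in>#q. okT L z" using A h2_pt(1) L unfolding q_def okT_def by auto
  show "sum_mset q = sum_mset p" using s xy unfolding q_def by (simp del: of_nat_sum_mset)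
  show "nu q 1 = nu q 7 + 5*(nu p 5 - nu p 3)" unfolding q_def using n1 n7 xy
    by (simp add: nu_plus nu_rep1)
  show "4*(nu p 5 - nu p 3) \<le> count q 1" unfolding q_def by simp
  show "q - replicate_mset (4*(nu p 5 - nu p 3)) 1 = image_mset h2 p" unfolding q_def by simp
  show "image_mset g2 (image_mset h2 p) = p"
    by (rule img_id) (use A h2_pt in auto)
qed

lemma br2i:
  assumes T: "\<forall>z\<in>#q. okT L z" and L: "L \<ge> 1" and D: "nu q 1 = nu q 7 + 5*m"
    and c: "4*m \<le> count q 1"
  defines "r \<equiv> q - replicate_mset (4*m) 1"
  shows "\<forall>z\<in>#image_mset g2 r. okA L z" "sum_mset (image_mset g2 r) = sum_mset q"
    "nu (image_mset g2 r) 5 = nu (image_mset g2 r) 3 + m"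
    "image_mset h2 (image_mset g2 r) = r" "r + replicate_mset (4*m) 1 = q"
proof -
  show qr: "r + replicate_mset (4*m) 1 = q" unfolding r_def using c by (rule sub_add)
  have Tr: "\<forall>z\<in>#r. okT L z" using T unfolding r_def by (auto dest: in_diffD)
  have a1: "nu r 1 + 4*m = nu q 1" using arg_cong[OF qr, of "\<lambda>x. nu x 1"] by (simp add: nu_plus nu_rep1)
  have a7: "nu r 7 = nu q 7" using arg_cong[OF qr, of "\<lambda>x. nu x 7"] by (simp add: nu_plus nu_rep1)
  have as: "sum_mset r + 4*m = sum_mset q" using arg_cong[OF qr, of sum_mset] by simp
  have n5: "nu (image_mset g2 r) 5 = nu r 1" by (rule nu_img) (use Tr g2_pt L in auto)
  have n3: "nu (image_mset g2 r) 3 = nu r 7" by (rule nu_img) (use Tr g2_pt L in auto)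
  have s: "int (sum_mset (image_mset g2 r)) = int (sum_mset r) + 4 * int (nu r 1) + (-4) * int (nu r 7)"
    using sum_shift[of r g2 1 4 "-4"] Tr g2_pt(7) L nuT7[OF Tr] by (auto simp: nu_def)
  show "\<forall>z\<in>#image_mset g2 r. okA L z" using Tr g2_pt(1) L by auto
  show "sum_mset (image_mset g2 r) = sum_mset q" using s a1 a7 as D by (simp del: of_nat_sum_mset)
  show "nu (image_mset g2 r) 5 = nu (image_mset g2 r) 3 + m" using n3 n5 a1 a7 D by simp
  show "image_mset h2 (image_mset g2 r) = r"
    by (rule img_id) (use Tr g2_pt L in auto)
qed

definition psi :: "nat multiset \<Rightarrow> nat multiset" where
  "psi r = r - replicate_mset 7 1 + {#7#}"
definition psinv :: "nat multiset \<Rightarrow> nat multiset" where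
  "psinv r = r - {#7#} + replicate_mset 7 1"

lemma psi_props:
  assumes T: "\<forall>z\<in>#q. okT L z" and L: "L \<ge> 1" and c: "7 \<le> count q 1"
  shows "\<forall>z\<in>#psi q. okT L z" "sum_mset (psi q) = sum_mset q" "nu (psi q) 1 + 7 = nu q 1"
    "nu (psi q) 7 = nu q 7 + 1" "count (psi q) 1 + 7 = count q 1" "count (psi q) 7 > 0"
    "psinv (psi q) = q"
proof -
  define r where "r = q - replicate_mset 7 1"
  have qr: "q = r + replicate_mset 7 1" unfolding r_def using c by (simp add: sub_add)
  have ps: "psi q = r + {#7#}" unfolding psi_def r_def ..
  have Tr: "\<forall>z\<in>#r. okT L z" using T unfolding r_def by (auto dest: in_diffD)
  show "\<forall>z\<in>#psi q. okT L z" using Tr L unfolding ps by (auto simp: okT_def)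
  have "sum_mset q = sum_mset r + 7" using qr by simp
  then show "sum_mset (psi q) = sum_mset q" unfolding ps by simp
  have q1: "nu q 1 = nu r 1 + 7" "nu q 7 = nu r 7" "count q 1 = count r 1 + 7"
    using qr by (simp_all add: nu_plus nu_rep1)
  show "nu (psi q) 1 + 7 = nu q 1" unfolding ps using q1 by (simp add: nu_plus nu_7)
  show "nu (psi q) 7 = nu q 7 + 1" unfolding ps using q1 by (simp add: nu_plus nu_7)
  show "count (psi q) 1 + 7 = count q 1" unfolding ps using q1 by simp
  show "count (psi q) 7 > 0" unfolding ps by simp
  show "psinv (psi q) = q" unfolding ps psinv_def using qr by simp
qed

lemma psinv_props:
  assumes T: "\<forall>z\<in>#q. okT L z" and L: "L \<ge> 1" and c: "0 < count q 7"
  shows "\<forall>z\<in>#psinv q. okT L z" "sum_mset (psinv q) = sum_mset q" "nu (psinv q) 1 = nu q 1 + 7"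
    "nu (psinv q) 7 + 1 = nu q 7" "count (psinv q) 1 = count q 1 + 7"
    "psi (psinv q) = q"
proof -
  define r where "r = q - {#7#}"
  have qr: "q = r + {#7#}" unfolding r_def using c by (simp add: multiset_eq_iff)
  have ps: "psinv q = r + replicate_mset 7 1" unfolding psinv_def r_def ..
  have Tr: "\<forall>z\<in>#r. okT L z" using T unfolding r_def by (auto dest: in_diffD)
  show "\<forall>z\<in>#psinv q. okT L z" using Tr L unfolding ps by (auto simp: okT_def)
  have "sum_mset q = sum_mset r + 7" using qr by simp
  then show "sum_mset (psinv q) = sum_mset q" unfolding ps by simp
  have q1: "nu q 1 = nu r 1" "nu q 7 = nu r 7 + 1" "count q 1 = count r 1"
    using qr by (simp_all add: nu_plus nu_7)
  show "nu (psinv q) 1 = nu q 1 + 7" unfolding ps using q1 by (simp add: nu_plus nu_rep1)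
  show "nu (psinv q) 7 + 1 = nu q 7" unfolding ps using q1 by (simp add: nu_plus nu_rep1)
  show "count (psinv q) 1 = count q 1 + 7" unfolding ps using q1 by simp
  show "psi (psinv q) = q" unfolding ps psi_def using qr by simp
qed

lemma m15: "\<not> 3 dvd (15*j+7::nat)" "\<not> 5 dvd (15*j+7::nat)" "(15*j+7::nat) mod 15 = 7" by presburger+
lemma a1: "(D::nat) mod 15 = 7 \<Longrightarrow> \<not> 3 dvd D \<and> \<not> 5 dvd D"
proof -
  assume "D mod 15 = 7"
  then have "D = 15*(D div 15) + 7" by (metis div_mult_mod_eq mult.commute)
  then show ?thesis using m15 by metis
qed
lemma a2: "(D::nat) mod 15 = 7 \<Longrightarrow> m = (D + 8) div 5 \<Longrightarrow> D + 8 = 5*m \<and> 3 dvd m \<and> m > 0"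
proof -
  assume h: "D mod 15 = 7" "m = (D + 8) div 5"
  then have e: "D = 15*(D div 15) + 7" by (metis div_mult_mod_eq mult.commute)
  have "D + 8 = 5 * (3 * (D div 15) + 3)" by (subst e) simp
  then have "m = 3 * (D div 15) + 3" using h(2) by simp
  then show ?thesis using \<open>D + 8 = _\<close> by simp
qed
lemma aux15: assumes "3 dvd (m::nat)" "m \<ge> 3"
  shows "(5*m - 8) mod 15 = 7" "\<not> 3 dvd (5*m - 8)" "\<not> 5 dvd (5*m - 8)" "(5*m-8+8) div 5 = m"
proof -
  obtain k where k: "m = 3*k" using assms(1) by blast
  have e: "5*m - 8 = 15*(k-1)+7" using k assms(2) by auto
  show "(5*m - 8) mod 15 = 7" "\<not> 3 dvd (5*m - 8)" "\<not> 5 dvd (5*m - 8)" unfolding e by (rule m15)+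
  show "(5*m-8+8) div 5 = m" using assms(2) by simp
qed

definition FF :: "nat multiset \<Rightarrow> nat multiset" where
  "FF p = (if nu p 5 \<le> nu p 3 then image_mset h1 p + replicate_mset (2*(nu p 3 - nu p 5)) 1
     else if 3 dvd (nu p 5 - nu p 3) then psi (image_mset h2 p + replicate_mset (4*(nu p 5 - nu p 3)) 1)
     else image_mset h2 p + replicate_mset (4*(nu p 5 - nu p 3)) 1)"

definition GG :: "nat multiset \<Rightarrow> nat multiset" where
  "GG q = (let D = nu q 1 - nu q 7 in
     if 3 dvd D then image_mset g1 (q - replicate_mset (2*(D div 3)) 1)
     else if 5 dvd D then image_mset g2 (q - replicate_mset (4*(D div 5)) 1)
     else image_mset g2 (psinv q - replicate_mset (4*((D+8) div 5)) 1))"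

definition condT :: "nat multiset \<Rightarrow> bool" where
  "condT q = (let D = nu q 1 - nu q 7 in
     (3 dvd D \<and> 2*D \<le> 3*count q 1) \<or> (5 dvd D \<and> \<not> 3 dvd D \<and> 4*D \<le> 5*count q 1) \<or>
     (D mod 15 = 7 \<and> count q 7 > 0 \<and> 4*D \<le> 5*count q 1 + 3))"

lemma FA:
  assumes A: "\<forall>z\<in>#p. okA L z" and L: "L \<ge> 1"
  shows "(\<forall>z\<in>#FF p. okT L z) \<and> sum_mset (FF p) = sum_mset p \<and> nu (FF p) 7 \<le> nu (FF p) 1
    \<and> condT (FF p) \<and> GG (FF p) = p"
proof (cases "nu p 5 \<le> nu p 3")
  case True
  define m where "m = nu p 3 - nu p 5"
  define q where "q = image_mset h1 p + replicate_mset (2*m) 1"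
  have F: "FF p = q" using True unfolding FF_def q_def m_def by simp
  note b = br1[OF A True L, folded m_def, folded q_def]
  have D: "nu q 1 - nu q 7 = 3*m" using b(3) by simp
  have c: "condT q" unfolding condT_def Let_def D using b(4) by simp
  have G: "GG q = p" unfolding GG_def Let_def D using b(5,6) by simp
  show ?thesis using b(1,2,3) c G F by simp
next
  case False
  define m where "m = nu p 5 - nu p 3"
  define q where "q = image_mset h2 p + replicate_mset (4*m) 1"
  have m0: "m > 0" using False unfolding m_def by simp
  note b = br2[OF A _ L, folded m_def, folded q_def] 
  have b3: "nu q 1 = nu q 7 + 5*m" and b4: "4*m \<le> count q 1"
    and b5: "q - replicate_mset (4*m) 1 = image_mset h2 p" using b False by auto
  have b1: "\<forall>z\<in>#q. okT L z" and b2: "sum_mset q = sum_mset p"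
    and b6: "image_mset g2 (image_mset h2 p) = p" using b False by auto
  show ?thesis
  proof (cases "3 dvd m")
    case False
    have F: "FF p = q" using \<open>\<not> nu p 5 \<le> nu p 3\<close> False unfolding FF_def q_def m_def by simp
    have D: "nu q 1 - nu q 7 = 5*m" using b3 by simp
    have n3: "\<not> 3 dvd (5*m)"
    proof
      assume "3 dvd 5*m"
      then have "3 dvd m" by presburger
      then show False using False by simp
    qed
    have c: "condT q" unfolding condT_def Let_def D using b4 n3 by simp
    have G: "GG q = p" unfolding GG_def Let_def D using b5 b6 n3 by simp
    show ?thesis using b1 b2 b3 c G F by simp
  next
    case True
    have F: "FF p = psi q" using \<open>\<not> nu p 5 \<le> nu p 3\<close> True unfolding FF_def q_def m_def by simp
    have m3: "m \<ge> 3" using True m0 by (auto dest: dvd_imp_le)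
    have c7: "7 \<le> count q 1" using b4 m3 by simp
    note ps = psi_props[OF b1 L c7]
    have D: "nu (psi q) 1 - nu (psi q) 7 = 5*m - 8" using ps(3,4) b3 m3 by simp
    have Dm: "(5*m - 8) mod 15 = 7" "\<not> 3 dvd (5*m - 8)" "\<not> 5 dvd (5*m - 8)" "(5*m-8+8) div 5 = m"
      using aux15[OF True m3] by blast+
    have c: "condT (psi q)" unfolding condT_def Let_def D using Dm ps(5,6) b4 m3 by simp
    have G: "GG (psi q) = p" unfolding GG_def Let_def D using Dm ps(7) b5 b6 by simp
    show ?thesis using ps(1,2,3,4) b2 b3 m3 c G F by simp
  qed
qed

lemma GT:
  assumes T: "\<forall>z\<in>#q. okT L z" and L: "L \<ge> 1" and le: "nu q 7 \<le> nu q 1" and cq: "condT q"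
  shows "(\<forall>z\<in>#GG q. okA L z) \<and> sum_mset (GG q) = sum_mset q \<and> FF (GG q) = q"
proof -
  define D where "D = nu q 1 - nu q 7"
  have DD: "nu q 1 = nu q 7 + D" using le unfolding D_def by simp
  have cq': "(3 dvd D \<and> 2*D \<le> 3*count q 1) \<or> (5 dvd D \<and> \<not> 3 dvd D \<and> 4*D \<le> 5*count q 1) \<or>
     (D mod 15 = 7 \<and> count q 7 > 0 \<and> 4*D \<le> 5*count q 1 + 3)"
    using cq unfolding condT_def Let_def D_def .
  consider (i) "3 dvd D" "2*D \<le> 3*count q 1" | (ii) "5 dvd D" "\<not> 3 dvd D" "4*D \<le> 5*count q 1"
    | (iii) "\<not> 3 dvd D" "\<not> 5 dvd D" "D mod 15 = 7" "count q 7 > 0" "4*D \<le> 5*count q 1 + 3"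
  proof -
    have "D mod 15 = 7 \<Longrightarrow> \<not> 3 dvd D \<and> \<not> 5 dvd D" by (rule a1)
    then show ?thesis using cq' that by blast
  qed
  then show ?thesis
  proof cases
    case i
    define m where "m = D div 3"
    have Dm: "D = 3*m" using i unfolding m_def by simp
    have c: "2*m \<le> count q 1" using i Dm by simp
    have G: "GG q = image_mset g1 (q - replicate_mset (2*m) 1)"
      unfolding GG_def Let_def D_def[symmetric] using i m_def by simp
    note b = br1i[OF T L _ c, folded G] 
    have b': "(\<forall>z\<in>#GG q. okA L z) \<and> sum_mset (GG q) = sum_mset q \<and> nu (GG q) 3 = nu (GG q) 5 + m
      \<and> image_mset h1 (GG q) = q - replicate_mset (2*m) 1
      \<and> q - replicate_mset (2*m) 1 + replicate_mset (2*m) 1 = q"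
      using b DD Dm by simp
    have "FF (GG q) = q" unfolding FF_def using b' by simp
    then show ?thesis using b' by simp
  next
    case ii
    define m where "m = D div 5"
    have Dm: "D = 5*m" using ii unfolding m_def by simp
    have c: "4*m \<le> count q 1" using ii Dm by simp
    have m3: "\<not> 3 dvd m" "m > 0" using ii Dm by (auto, metis dvd_0_right mult_0_right neq0_conv)
    have G: "GG q = image_mset g2 (q - replicate_mset (4*m) 1)"
      unfolding GG_def Let_def D_def[symmetric] using ii m_def by simp
    note b = br2i[OF T L _ c, folded G] 
    have b': "(\<forall>z\<in>#GG q. okA L z) \<and> sum_mset (GG q) = sum_mset q \<and> nu (GG q) 5 = nu (GG q) 3 + m
      \<and> image_mset h2 (GG q) = q - replicate_mset (4*m) 1
      \<and> q - replicate_mset (4*m) 1 + replicate_mset (4*m) 1 = q"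
      using b DD Dm by simp
    have "FF (GG q) = q" unfolding FF_def using b' m3 by simp
    then show ?thesis using b' by simp
  next
    case iii
    define m where "m = (D + 8) div 5"
    have Dm: "D + 8 = 5*m" "3 dvd m" "m > 0" using a2[OF iii(3) m_def] by auto
    note pi = psinv_props[OF T L iii(4)]
    define q' where "q' = psinv q"
    have T': "\<forall>z\<in>#q'. okT L z" and D': "nu q' 1 = nu q' 7 + 5*m" and c: "4*m \<le> count q' 1"
      using pi DD Dm iii(5) unfolding q'_def by auto
    have G: "GG q = image_mset g2 (q' - replicate_mset (4*m) 1)"
      unfolding GG_def Let_def D_def[symmetric] q'_def using iii m_def by simp
    note b = br2i[OF T' L D' c, folded G] 
    have b': "(\<forall>z\<in>#GG q. okA L z) \<and> sum_mset (GG q) = sum_mset q' \<and> nu (GG q) 5 = nu (GG q) 3 + m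
      \<and> image_mset h2 (GG q) = q' - replicate_mset (4*m) 1
      \<and> q' - replicate_mset (4*m) 1 + replicate_mset (4*m) 1 = q'"
      using b by simp
    have "FF (GG q) = psi q'" unfolding FF_def using b' Dm by simp
    then show ?thesis using b' pi unfolding q'_def by simp
  qed
qed

lemma pos_mod: "(x::nat) mod 8 = k \<Longrightarrow> 0 < k \<Longrightarrow> 0 < x"
  by (cases x) auto

lemma memA: "p \<in> {p \<in> partitions n. \<forall>x\<in>#p. (x mod 8 = 3 \<or> x mod 8 = 5) \<and> x \<le> 8 * L - 3}
   \<longleftrightarrow> (\<forall>z\<in>#p. okA L z) \<and> sum_mset p = n"
  unfolding partitions_def okA_def by (auto dest: pos_mod)

lemma dv3: "((3::int) dvd int D) = (3 dvd D)" by (metis int_dvd_int_iff of_nat_numeral)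
lemma dv5: "((5::int) dvd int D) = (5 dvd D)" by (metis int_dvd_int_iff of_nat_numeral)
lemma md15: "(int D mod 15 = (-8) mod 15) = (D mod 15 = 7)"
proof -
  have "int D mod 15 = int (D mod 15)" by (simp add: zmod_int)
  then show ?thesis by simp
qed

lemma memT: "p \<in> {p \<in> partitions n.
      (\<forall>x\<in>#p. (x mod 8 = 1 \<or> x mod 8 = 7) \<and> x \<le> 8 * L - 1) \<and>
      nu p 1 \<ge> nu p 7 \<and>
      (let D = int (nu p 1) - int (nu p 7) in
         (3 dvd D \<and> 3 * int (mu p 1) \<ge> 2 * D) \<or>
         (5 dvd D \<and> \<not> 3 dvd D \<and> 5 * int (mu p 1) \<ge> 4 * D) \<or>
         (D mod 15 = (-8) mod 15 \<and> mu p 7 > 0 \<and> 5 * int (mu p 1) \<ge> 4 * D - 3))}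
   \<longleftrightarrow> (\<forall>z\<in>#p. okT L z) \<and> sum_mset p = n \<and> nu p 7 \<le> nu p 1 \<and> condT p"
proof -
  have pos: "(\<forall>z\<in>#p. okT L z) \<Longrightarrow> (\<forall>x\<in>#p. 0 < x)" unfolding okT_def by (auto dest: pos_mod)
  have e: "(let D = int (nu p 1) - int (nu p 7) in
         (3 dvd D \<and> 3 * int (mu p 1) \<ge> 2 * D) \<or>
         (5 dvd D \<and> \<not> 3 dvd D \<and> 5 * int (mu p 1) \<ge> 4 * D) \<or>
         (D mod 15 = (-8) mod 15 \<and> mu p 7 > 0 \<and> 5 * int (mu p 1) \<ge> 4 * D - 3)) = condT p"
    if le: "nu p 7 \<le> nu p 1"
  proof -
    define D where "D = nu p 1 - nu p 7"
    define a where "a = count p 1"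
    have iD: "int (nu p 1) - int (nu p 7) = int D" using le unfolding D_def by simp
    have i1: "(2 * int D \<le> 3 * int a) = (2*D \<le> 3*a)" "(4 * int D \<le> 5 * int a) = (4*D \<le> 5*a)"
      "(4 * int D - 3 \<le> 5 * int a) = (4*D \<le> 5*a + 3)" by linarith+
    show ?thesis unfolding condT_def Let_def mu_def iD D_def[symmetric] a_def[symmetric]
      dv3 dv5 md15 i1 ..
  qed
  have ok: "(\<forall>x\<in>#p. (x mod 8 = 1 \<or> x mod 8 = 7) \<and> x \<le> 8 * L - 1) = (\<forall>z\<in>#p. okT L z)"
    unfolding okT_def by simp
  show ?thesis unfolding mem_Collect_eq partitions_def ok using pos e by blast
qed

theorem theorem3:
  fixes L n :: nat
  assumes "L \<ge> 1"
  shows "A_tilde_L0 L n = A_L1 L n"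
proof -
  let ?SA = "{p \<in> partitions n. \<forall>x\<in>#p. (x mod 8 = 3 \<or> x mod 8 = 5) \<and> x \<le> 8 * L - 3}"
  let ?ST = "{p \<in> partitions n.
      (\<forall>x\<in>#p. (x mod 8 = 1 \<or> x mod 8 = 7) \<and> x \<le> 8 * L - 1) \<and>
      nu p 1 \<ge> nu p 7 \<and>
      (let D = int (nu p 1) - int (nu p 7) in
         (3 dvd D \<and> 3 * int (mu p 1) \<ge> 2 * D) \<or>
         (5 dvd D \<and> \<not> 3 dvd D \<and> 5 * int (mu p 1) \<ge> 4 * D) \<or>
         (D mod 15 = (-8) mod 15 \<and> mu p 7 > 0 \<and> 5 * int (mu p 1) \<ge> 4 * D - 3))}"
  have "bij_betw FF ?SA ?ST"
  proof (rule bij_betw_byWitness[where f'=GG])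
    show "\<forall>a\<in>?SA. GG (FF a) = a"
    proof
      fix a assume "a \<in> ?SA"
      then have "(\<forall>z\<in>#a. okA L z) \<and> sum_mset a = n" by (rule memA[THEN iffD1])
      then show "GG (FF a) = a" using FA[OF _ assms] by blast
    qed
    show "\<forall>a\<in>?ST. FF (GG a) = a"
    proof
      fix a assume "a \<in> ?ST"
      then have "(\<forall>z\<in>#a. okT L z) \<and> sum_mset a = n \<and> nu a 7 \<le> nu a 1 \<and> condT a" by (rule memT[THEN iffD1])
      then show "FF (GG a) = a" using GT[OF _ assms] by blast
    qed
    show "FF ` ?SA \<subseteq> ?ST"
    proof
      fix b assume "b \<in> FF ` ?SA"
      then obtain a where a: "a \<in> ?SA" "b = FF a" by blast
      from a(1) have "(\<forall>z\<in>#a. okA L z) \<and> sum_mset a = n" by (rule memA[THEN iffD1])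
      then have "(\<forall>z\<in>#b. okT L z) \<and> sum_mset b = n \<and> nu b 7 \<le> nu b 1 \<and> condT b"
        using FA[OF _ assms, of a] a(2) by simp
      then show "b \<in> ?ST" by (rule memT[THEN iffD2])
    qed
    show "GG ` ?ST \<subseteq> ?SA"
    proof
      fix b assume "b \<in> GG ` ?ST"
      then obtain a where a: "a \<in> ?ST" "b = GG a" by blast
      from a(1) have "(\<forall>z\<in>#a. okT L z) \<and> sum_mset a = n \<and> nu a 7 \<le> nu a 1 \<and> condT a" by (rule memT[THEN iffD1])
      then have "(\<forall>z\<in>#b. okA L z) \<and> sum_mset b = n"
        using GT[OF _ assms, of a] a(2) by simp
      then show "b \<in> ?SA" by (rule memA[THEN iffD2])
    qed
  qed
  then have "card ?SA = card ?ST" by (rule bij_betw_same_card)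
  then show ?thesis unfolding A_tilde_L0_def A_L1_def by simp
qed

end
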